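(* Let $\{z_n\}$ be generated by the process $\mathcal{S}(\kappa,\Phi)$ of Theorem 6 ($\kappa$ with $\sum_n\rho^{\kappa(n)}=\infty$ for all $0<\rho\le1$; $\Phi$ the non-modal count with respect to $K$-nearest neighbors, $K\ge2$). Let $Q_n=\{x\in X:\Phi(x,Z_n)>0\}$ and $Q=\limsup_n Q_n$ (points lying in infinitely many $Q_n$). If $X$ is separable and the set of $f$-boundary points has $\mu$-measure zero, then with probability one $\mu(Q)=0$.
   Context: $(X,d)$ metric space with probability measure $\mu$; $Y$ countable; $f:X\to Y$; $X_y=f^{-1}(y)$; $B_\epsilon(x)$ open ball; $\operatorname{supp}(\mu)=\{x:\mu(B_\epsilon(x))>0\ \forall\epsilon>0\}$. $b$ is an $f$-boundary point iff $\mu(B_\epsilon(b)\setminus X_{f(b)})>0$ for all $\epsilon>0$. $\operatorname{modefreq}_f(A)=\max_y|A\cap X_y|$. $V_S(x)=\emptyset$ if $x\in S$; otherwise $V_S(x)$ is a $K$-element subset of $S$ minimizing distance to $x$, chosen among such subsets to minimize $\operatorname{modefreq}_f$. $\Phi(x,S)=|V_S(x)|-\operatorname{modefreq}_f(V_S(x))$. Process $\mathcal{S}(\kappa,\Phi)$: $Z_0=\emptyset$; at step $n$ draw $\kappa(n)$ candidates i.i.d. from $\mu$, independent of the past; $z_n$ maximizes $\Phi(\cdot,Z_{n-1})$ over candidates (ties uniformly at random); $Z_n=\{z_1,\dots,z_n\}$. *)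

theory Defs
  imports "HOL-Probability.Probability"
begin

definition modefreq :: "('a \<Rightarrow> 'b) \<Rightarrow> 'a set \<Rightarrow> nat" where
  "modefreq f A = (if A = {} then 0 else Max ((\<lambda>y. card {a\<in>A. f a = y}) ` (f ` A)))"

definition knn_sets :: "nat \<Rightarrow> 'a::metric_space set \<Rightarrow> 'a \<Rightarrow> 'a set set" where
  "knn_sets K S x = {V. V \<subseteq> S \<and> card V = min K (card S) \<and>
       (\<forall>v\<in>V. \<forall>w\<in>S - V. dist x v \<le> dist x w)}"

definition Vset :: "nat \<Rightarrow> ('a::metric_space \<Rightarrow> 'b) \<Rightarrow> 'a set \<Rightarrow> 'a \<Rightarrow> 'a set" where
  "Vset K f S x = (if x \<in> S then {} else
     (SOME V. V \<in> knn_sets K S x \<and> (\<forall>W\<in>knn_sets K S x. modefreq f V \<le> modefreq f W)))"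

definition Phi :: "nat \<Rightarrow> ('a::metric_space \<Rightarrow> 'b) \<Rightarrow> 'a \<Rightarrow> 'a set \<Rightarrow> nat" where
  "Phi K f x S = card (Vset K f S x) - modefreq f (Vset K f S x)"

definition boundary_pt :: "'a::metric_space measure \<Rightarrow> ('a \<Rightarrow> 'b) \<Rightarrow> 'a \<Rightarrow> bool" where
  "boundary_pt \<mu> f b \<longleftrightarrow> (\<forall>\<epsilon>>0. emeasure \<mu> (ball b \<epsilon> - f -` {f b}) > 0)"

text \<open>One step of the process: among the candidates c 0,...,c (k-1), choose one maximizing
  Phi(.,S); ties are broken by the tie-breaking value t in [0,1], which, when uniformly
  distributed, selects uniformly at random among the maximizing candidates.\<close>
definition pick :: "nat \<Rightarrow> ('a::metric_space \<Rightarrow> 'b) \<Rightarrow> 'a set \<Rightarrow> nat \<Rightarrow> (nat \<Rightarrow> 'a) \<Rightarrow> real \<Rightarrow> 'a" where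
  "pick K f S k c t =
    (let m = Max ((\<lambda>j. Phi K f (c j) S) ` {..<k});
         idx = filter (\<lambda>i. Phi K f (c i) S = m) [0..<k]
     in c (idx ! min (nat \<lfloor>t * real (length idx)\<rfloor>) (length idx - 1)))"

text \<open>The process S(kappa,Phi) driven by candidates C n i (i < kappa n, the candidates of
  step n) and tie-breaking values T n: Zproc .. n = Z_n, with Z_0 = {} and
  Z_n = insert z_n Z_(n-1), z_n = zproc .. n.\<close>
fun Zproc :: "nat \<Rightarrow> ('a::metric_space \<Rightarrow> 'b) \<Rightarrow> (nat \<Rightarrow> nat) \<Rightarrow> (nat \<Rightarrow> nat \<Rightarrow> 'a) \<Rightarrow> (nat \<Rightarrow> real) \<Rightarrow> nat \<Rightarrow> 'a set" where
  "Zproc K f \<kappa> C T 0 = {}"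
| "Zproc K f \<kappa> C T (Suc n) =
     insert (pick K f (Zproc K f \<kappa> C T n) (\<kappa> (Suc n)) (C (Suc n)) (T (Suc n))) (Zproc K f \<kappa> C T n)"

text \<open>Underlying probability space: all candidates i.i.d. mu, all tie-breakers i.i.d.
  uniform on [0,1], everything independent.\<close>
definition sample_space :: "'a measure \<Rightarrow> ((nat \<times> nat \<Rightarrow> 'a) \<times> (nat \<Rightarrow> real)) measure" where
  "sample_space \<mu> = (PiM UNIV (\<lambda>_. \<mu>)) \<Otimes>\<^sub>M (PiM UNIV (\<lambda>_. uniform_measure lborel {0..1::real}))"

end

theory Submission
  imports Defs
begin

lemma pick_in:
  assumes "k \<ge> 1"
  shows "\<exists>j<k. pick K f S k c t = c j"
proof -
  define m where "m = Max ((\<lambda>j. Phi K f (c j) S) ` {..<k})"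
  define idx where "idx = filter (\<lambda>i. Phi K f (c i) S = m) [0..<k]"
  have "m \<in> (\<lambda>j. Phi K f (c j) S) ` {..<k}" unfolding m_def
    using assms by (intro Max_in) (auto simp: lessThan_empty_iff)
  then obtain j where j: "j < k" "Phi K f (c j) S = m" by auto
  then have "j \<in> set idx" unfolding idx_def by auto
  then have ne: "length idx > 0" by (cases idx) auto
  define p where "p = min (nat \<lfloor>t * real (length idx)\<rfloor>) (length idx - 1)"
  have "p \<le> length idx - 1" unfolding p_def by simp
  then have "p < length idx" using ne by linarith
  then have "idx ! p \<in> set idx" by simp
  then have "idx ! p < k" unfolding idx_def by auto
  moreover have "pick K f S k c t = c (idx ! p)"
    unfolding pick_def m_def idx_def p_def Let_def by simp
  ultimately show ?thesis by (intro exI[of _ "idx ! p"]) simp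
qed

lemma Zproc_mono:
  "n \<le> m \<Longrightarrow> Zproc K f \<kappa> C T n \<subseteq> Zproc K f \<kappa> C T m"
  by (induction m) (auto simp: le_Suc_eq)

lemma Zproc_finite: "finite (Zproc K f \<kappa> C T n)"
  by (induction n) auto

lemma Zproc_cand:
  assumes "\<And>n. n \<ge> 1 \<Longrightarrow> \<kappa> n \<ge> 1"
  shows "z \<in> Zproc K f \<kappa> C T n \<Longrightarrow> \<exists>m i. i < \<kappa> m \<and> z = C m i"
proof (induction n)
  case 0 then show ?case by simp
next
  case (Suc n)
  show ?case
  proof (cases "z \<in> Zproc K f \<kappa> C T n")
    case True then show ?thesis using Suc by blast
  next
    case False
    then have "z = pick K f (Zproc K f \<kappa> C T n) (\<kappa> (Suc n)) (C (Suc n)) (T (Suc n))"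
      using Suc.prems by simp
    with pick_in[OF assms[of "Suc n"]] show ?thesis by fastforce
  qed
qed

lemma knn_exists:
  assumes "finite S" "k \<le> card S"
  shows "\<exists>V. V \<subseteq> S \<and> card V = k \<and> (\<forall>v\<in>V. \<forall>w\<in>S - V. dist x v \<le> dist x w)"
  using assms(2)
proof (induction k)
  case 0 then show ?case by (intro exI[of _ "{}"]) auto
next
  case (Suc k)
  then obtain V where V: "V \<subseteq> S" "card V = k" "\<forall>v\<in>V. \<forall>w\<in>S - V. dist x v \<le> dist x w" by auto
  have fV: "finite V" using V(1) assms(1) finite_subset by blast
  have "card (S - V) > 0" using Suc.prems V fV assms(1) by (simp add: card_Diff_subset)
  then have ne: "S - V \<noteq> {}" "finite (S - V)" using assms(1) by (metis card.empty less_irrefl, simp)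
  define d where "d = Min (dist x ` (S - V))"
  have "d \<in> dist x ` (S - V)" unfolding d_def using ne by (intro Min_in) auto
  then obtain w where w: "w \<in> S - V" "dist x w = d" by auto
  have dmin: "\<And>u. u \<in> S - V \<Longrightarrow> d \<le> dist x u" unfolding d_def using ne by auto
  show ?case
  proof (intro exI[of _ "insert w V"] conjI)
    show "insert w V \<subseteq> S" using w V by auto
    show "card (insert w V) = Suc k" using w V fV by auto
    show "\<forall>v\<in>insert w V. \<forall>u\<in>S - insert w V. dist x v \<le> dist x u"
      using V(3) dmin w by auto
  qed
qed

lemma Vset_prop:
  assumes "finite S" "x \<notin> S"
  shows "Vset K f S x \<in> knn_sets K S x"
proof -
  obtain V0 where "V0 \<subseteq> S \<and> card V0 = min K (card S) \<and> (\<forall>v\<in>V0. \<forall>w\<in>S - V0. dist x v \<le> dist x w)"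
    using knn_exists[OF assms(1), of "min K (card S)" x] by auto
  then have "V0 \<in> knn_sets K S x" unfolding knn_sets_def by auto
  then obtain V where "V \<in> knn_sets K S x \<and> (\<forall>W. W \<in> knn_sets K S x \<longrightarrow> modefreq f V \<le> modefreq f W)"
    using ex_has_least_nat[of "\<lambda>V. V \<in> knn_sets K S x" V0 "modefreq f"] by blast
  then have "\<exists>V. V \<in> knn_sets K S x \<and> (\<forall>W\<in>knn_sets K S x. modefreq f V \<le> modefreq f W)" by blast
  then have "(SOME V. V \<in> knn_sets K S x \<and> (\<forall>W\<in>knn_sets K S x. modefreq f V \<le> modefreq f W)) \<in> knn_sets K S x"
    by (rule someI2_ex) auto
  then show ?thesis unfolding Vset_def using assms(2) by simp
qed

lemma modefreq_const:
  assumes "finite V" "V \<noteq> {}" "\<And>v. v \<in> V \<Longrightarrow> f v = y"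
  shows "modefreq f V = card V"
proof -
  have "f ` V = {y}" using assms by auto
  moreover have "{a\<in>V. f a = y} = V" using assms by auto
  ultimately show ?thesis unfolding modefreq_def using assms by simp
qed

lemma Phi_zero:
  assumes "finite S" "P \<subseteq> S" "card P = K" "K \<ge> 1" "P \<subseteq> ball x r"
    and lab: "\<And>s. s \<in> S \<Longrightarrow> s \<in> ball x r \<Longrightarrow> f s = y"
  shows "Phi K f x S = 0"
proof (cases "x \<in> S")
  case True then show ?thesis unfolding Phi_def Vset_def by simp
next
  case False
  define V where "V = Vset K f S x"
  have V: "V \<in> knn_sets K S x" using Vset_prop[OF assms(1) False] V_def by simp
  have "card P \<le> card S" using assms card_mono by blast
  then have cV: "card V = K" using V assms(3) unfolding knn_sets_def by auto
  have VS: "V \<subseteq> S" using V unfolding knn_sets_def by auto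
  have fV: "finite V" using VS assms(1) finite_subset by blast
  have Vb: "V \<subseteq> ball x r"
  proof
    fix v assume v: "v \<in> V"
    show "v \<in> ball x r"
    proof (rule ccontr)
      assume nv: "v \<notin> ball x r"
      have "P \<subseteq> V"
      proof
        fix p assume p: "p \<in> P"
        show "p \<in> V"
        proof (rule ccontr)
          assume "p \<notin> V"
          then have "dist x v \<le> dist x p" using V v p assms(2) unfolding knn_sets_def by auto
          moreover have "dist x p < r" using p assms(5) by auto
          ultimately show False using nv by auto
        qed
      qed
      moreover have "v \<notin> P" using nv assms(5) by auto
      ultimately have "insert v P \<subseteq> V" using v by auto
      then have "card (insert v P) \<le> card V" using fV card_mono by blast
      moreover have "finite P" using assms(2) assms(1) finite_subset by blast
      ultimately show False using \<open>v \<notin> P\<close> cV assms(3) by simp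
    qed
  qed
  have "V \<noteq> {}" using cV assms(4) by auto
  moreover have "\<And>v. v \<in> V \<Longrightarrow> f v = y"
  proof -
    fix v assume "v \<in> V"
    then have "v \<in> S" "v \<in> ball x r" using VS Vb by auto
    then show "f v = y" by (rule lab)
  qed
  ultimately have "modefreq f V = card V"
    by (rule modefreq_const[OF fV])
  then show ?thesis unfolding Phi_def V_def[symmetric] by simp
qed


lemma det:
  fixes x :: "'a::metric_space"
  assumes kpos: "\<And>n. n \<ge> 1 \<Longrightarrow> \<kappa> n \<ge> 1" and K1: "K \<ge> 1" and r: "r > 0"
    and lab: "\<And>n i. C n i \<in> ball x r \<Longrightarrow> f (C n i) = f x"
    and hit: "\<And>\<delta> m. \<delta> > 0 \<Longrightarrow> \<exists>n\<ge>m. \<forall>i<\<kappa> n. C n i \<in> ball x \<delta>"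
  shows "\<forall>\<^sub>F n in sequentially. Phi K f x (Zproc K f \<kappa> C T n) = 0"
proof -
  let ?Z = "Zproc K f \<kappa> C T"
  have step: "\<exists>n0. x \<in> ?Z n0 \<or> (\<exists>P. finite P \<and> P \<subseteq> ?Z n0 \<and> P \<subseteq> ball x r \<and> card P = k)" for k
  proof (induction k)
    case 0 show ?case by (intro exI[of _ 0]) (auto intro!: exI[of _ "{}"])
  next
    case (Suc k)
    then obtain n0 where n0: "x \<in> ?Z n0 \<or> (\<exists>P. finite P \<and> P \<subseteq> ?Z n0 \<and> P \<subseteq> ball x r \<and> card P = k)"
      by blast
    show ?case
    proof (cases "x \<in> ?Z n0")
      case True then show ?thesis by (intro exI[of _ n0]) simp
    next
      case False
      with n0 obtain P where P: "finite P" "P \<subseteq> ?Z n0" "P \<subseteq> ball x r" "card P = k" by blast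
      have xP: "x \<notin> P" using P(2) False by auto
      define \<delta> where "\<delta> = Min (insert r (dist x ` P))"
      have \<delta>pos: "\<delta> > 0" unfolding \<delta>_def using P(1) xP r by (auto simp: Min_gr_iff)
      have \<delta>r: "\<delta> \<le> r" unfolding \<delta>_def using P(1) by simp
      have \<delta>P: "\<And>p. p \<in> P \<Longrightarrow> \<delta> \<le> dist x p" unfolding \<delta>_def using P(1) by simp
      obtain n where n: "n \<ge> Suc n0" "\<forall>i<\<kappa> n. C n i \<in> ball x \<delta>" using hit[OF \<delta>pos] by blast
      obtain n' where n': "n = Suc n'" using n(1) by (cases n) auto
      define z where "z = pick K f (?Z n') (\<kappa> n) (C n) (T n)"
      have zZ: "z \<in> ?Z n" unfolding z_def n' by simp
      have "\<exists>j<\<kappa> n. z = C n j"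
        unfolding z_def by (rule pick_in) (use kpos[of n] n' in auto)
      then obtain j where j: "j < \<kappa> n" "z = C n j" by blast
      have zb: "z \<in> ball x \<delta>" using n(2) j by auto
      have mono: "?Z n0 \<subseteq> ?Z n" using n(1) by (intro Zproc_mono) simp
      show ?thesis
      proof (cases "z = x")
        case True then show ?thesis using zZ by (intro exI[of _ n]) simp
      next
        case False
        have zP: "z \<notin> P" using zb \<delta>P[of z] by auto
        have h1: "finite (insert z P)" using P(1) by simp
        have h2: "insert z P \<subseteq> ?Z n" using P(2) zZ mono by simp
        have "z \<in> ball x r" using zb \<delta>r by simp
        then have h3: "insert z P \<subseteq> ball x r" using P(3) by simp
        have h4: "card (insert z P) = Suc k" using P(1,4) zP by simp
        show ?thesis by (intro exI[of _ n] disjI2 exI[of _ "insert z P"]) (use h1 h2 h3 h4 in simp)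
      qed
    qed
  qed
  from step[of K] obtain n0 where n0: "x \<in> ?Z n0 \<or> (\<exists>P. finite P \<and> P \<subseteq> ?Z n0 \<and> P \<subseteq> ball x r \<and> card P = K)"
    ..
  show ?thesis
    unfolding eventually_sequentially
  proof (intro exI[of _ n0] allI impI)
    fix n assume "n0 \<le> n"
    then have mono: "?Z n0 \<subseteq> ?Z n" by (rule Zproc_mono)
    show "Phi K f x (?Z n) = 0"
    proof (cases "x \<in> ?Z n0")
      case True
      then have "x \<in> ?Z n" using mono by auto
      then show ?thesis unfolding Phi_def Vset_def by simp
    next
      case False
      with n0 obtain P where P: "finite P" "P \<subseteq> ?Z n0" "P \<subseteq> ball x r" "card P = K" by blast
      show ?thesis
      proof (rule Phi_zero[OF Zproc_finite _ P(4) K1 P(3)])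
        show "P \<subseteq> ?Z n" using P(2) mono by auto
        fix s assume s: "s \<in> ?Z n" "s \<in> ball x r"
        obtain m i where "i < \<kappa> m" "s = C m i" using Zproc_cand[OF kpos s(1)] by blast
        then show "f s = f x" using lab[of m i] s(2) by simp
      qed
    qed
  qed
qed


lemma indep_coords:
  assumes pm: "prob_space \<mu>"
  shows "prob_space.indep_vars (PiM (UNIV::'i set) (\<lambda>_. \<mu>)) (\<lambda>_. \<mu>) (\<lambda>j \<omega>. \<omega> j) UNIV"
proof -
  let ?P = "PiM (UNIV::'i set) (\<lambda>_. \<mu>)"
  interpret P: prob_space ?P using pm by (intro prob_space_PiM) auto
  have d: "distr ?P \<mu> (\<lambda>x. x i) = \<mu>" for i
    using pm by (intro distr_PiM_component) auto
  have 1: "(\<lambda>x::'i\<Rightarrow>'a. \<lambda>i\<in>UNIV. x i) = (\<lambda>x. x)" by (simp add: restrict_UNIV)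
  have 2: "(\<lambda>i. distr ?P \<mu> (\<lambda>x. x i)) = (\<lambda>i. \<mu>)" by (simp add: d)
  have rv: "(\<lambda>x. x i) \<in> measurable ?P \<mu>" for i :: 'i by (intro measurable_component_singleton) auto
  show ?thesis
    apply (subst P.indep_vars_iff_distr_eq_PiM)
      apply simp
     apply (rule rv)
    apply (simp only: 1 2 distr_id)
    done
qed

lemma prob_block:
  assumes pm: "prob_space \<mu>" and B: "B \<in> sets \<mu>"
  shows "measure (PiM (UNIV::(nat\<times>nat) set) (\<lambda>_. \<mu>))
           {\<omega> \<in> space (PiM UNIV (\<lambda>_. \<mu>)). \<forall>j\<in>{n}\<times>{..<k}. \<omega> j \<in> B} = measure \<mu> B ^ k"
proof -
  let ?P = "PiM (UNIV::(nat\<times>nat) set) (\<lambda>_. \<mu>)"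
  interpret mu: prob_space \<mu> by fact
  have "{\<omega> \<in> space ?P. \<forall>j\<in>{n}\<times>{..<k}. \<omega> j \<in> B} = prod_emb UNIV (\<lambda>_. \<mu>) ({n}\<times>{..<k}) (Pi\<^sub>E ({n}\<times>{..<k}) (\<lambda>_. B))"
    by (auto simp: prod_emb_def space_PiM PiE_iff)
  moreover have "emeasure ?P (prod_emb UNIV (\<lambda>_. \<mu>) ({n}\<times>{..<k}) (Pi\<^sub>E ({n}\<times>{..<k}) (\<lambda>_. B)))
      = (\<Prod>j\<in>{n}\<times>{..<k}. emeasure \<mu> B)"
    using pm B by (intro emeasure_PiM_emb) auto
  ultimately have "emeasure ?P {\<omega> \<in> space ?P. \<forall>j\<in>{n}\<times>{..<k}. \<omega> j \<in> B} = emeasure \<mu> B ^ k"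
    by (simp add: card_cartesian_product)
  also have "\<dots> = ennreal (measure \<mu> B ^ k)"
    by (simp add: mu.emeasure_eq_measure ennreal_power)
  finally show ?thesis
    by (simp add: measure_def)
qed


lemma partial_unbounded:
  fixes q :: "nat \<Rightarrow> real"
  assumes nn: "\<And>n. 0 \<le> q n" and le1: "\<And>n. q n \<le> 1" and ns: "\<not> summable q"
  shows "\<exists>M>m. L \<le> (\<Sum>n\<in>{m..<M}. q n)"
proof -
  have "\<not> (\<forall>M. sum q {..<M} \<le> \<bar>L\<bar> + real m)"
    using ns summableI_nonneg_bounded[of q "\<bar>L\<bar> + real m"] nn by blast
  then obtain M where M: "sum q {..<M} > \<bar>L\<bar> + real m" by (auto simp: not_le)
  have sm: "sum q {..<m} \<le> real m"
  proof -
    have "sum q {..<m} \<le> sum (\<lambda>_. 1::real) {..<m}" by (intro sum_mono le1)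
    then show ?thesis by simp
  qed
  have Mm: "M > m"
  proof (rule ccontr)
    assume "\<not> M > m"
    then have "sum q {..<M} \<le> sum q {..<m}" by (intro sum_mono2) (auto simp: nn)
    with M sm nn[of 0] show False by (smt (verit) nn sum_nonneg)
  qed
  have "sum q {..<M} = sum q {..<m} + sum q {m..<M}"
    using Mm by (metis less_imp_le_nat sum.atLeastLessThan_concat atLeast0LessThan zero_le)
  then show ?thesis using M sm Mm by (intro exI[of _ M]) auto
qed

lemma hit_AE:
  fixes \<mu> :: "'a measure" and \<kappa> :: "nat \<Rightarrow> nat"
  assumes pm: "prob_space \<mu>" and B[measurable]: "B \<in> sets \<mu>"
    and div: "\<not> summable (\<lambda>n. measure \<mu> B ^ \<kappa> n)"
  shows "AE \<omega> in PiM (UNIV::(nat\<times>nat) set) (\<lambda>_. \<mu>). \<forall>m. \<exists>n\<ge>m. \<forall>i<\<kappa> n. \<omega> (n,i) \<in> B"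
proof -
  let ?P = "PiM (UNIV::(nat\<times>nat) set) (\<lambda>_. \<mu>)"
  interpret P: prob_space ?P using pm by (intro prob_space_PiM) auto
  interpret mu: prob_space \<mu> by fact
  define Kn where "Kn n = {n} \<times> {..<\<kappa> n}" for n
  have ind: "P.indep_vars (\<lambda>n. PiM (Kn n) (\<lambda>_. \<mu>)) (\<lambda>n \<omega>. restrict (\<lambda>i. \<omega> i) (Kn n)) UNIV"
    by (rule P.indep_vars_restrict[OF indep_coords[OF pm]]) (auto simp: disjoint_family_on_def Kn_def)
  define A where "A n = space (PiM (Kn n) (\<lambda>_. \<mu>)) - PiE (Kn n) (\<lambda>_. B)" for n
  have A: "A n \<in> sets (PiM (Kn n) (\<lambda>_. \<mu>))" for n
    unfolding A_def by (intro sets.compl_sets sets_PiM_I_finite) (auto simp: Kn_def)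
  define q where "q n = measure \<mu> B ^ \<kappa> n" for n
  define F where "F n = (\<lambda>\<omega>. restrict (\<lambda>i. \<omega> i) (Kn n)) -` A n \<inter> space ?P" for n
  have F_eq: "F n = space ?P - {\<omega> \<in> space ?P. \<forall>j\<in>{n}\<times>{..<\<kappa> n}. \<omega> j \<in> B}" for n
    unfolding F_def A_def Kn_def by (auto simp: space_PiM PiE_iff)
  have E_sets: "{\<omega> \<in> space ?P. \<forall>j\<in>{n}\<times>{..<\<kappa> n}. \<omega> j \<in> B} \<in> sets ?P" for n
    by measurable
  have probF: "P.prob (F n) = 1 - q n" for n
    unfolding F_eq q_def
    by (subst P.prob_compl[OF E_sets]) (use prob_block[OF pm B, of n "\<kappa> n"] in simp)
  have prodF: "P.prob (\<Inter>n\<in>J. F n) = (\<Prod>n\<in>J. 1 - q n)" if "J \<noteq> {}" "finite J" for J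
    unfolding F_def using P.indep_varsD[OF ind that] A by (simp add: probF[unfolded F_def])
  have q01: "0 \<le> q n" "q n \<le> 1" for n
    unfolding q_def by (auto intro!: power_le_one)
  define G where "G m = {\<omega> \<in> space ?P. \<forall>n. m \<le> n \<longrightarrow> \<not> (\<forall>i<\<kappa> n. \<omega> (n,i) \<in> B)}" for m
  have G_sets: "G m \<in> sets ?P" for m
    unfolding G_def by measurable
  have Gsub: "G m \<subseteq> (\<Inter>n\<in>{m..<M}. F n)" if "M > m" for m M
    using that unfolding G_def F_eq by auto
  have Gbound: "P.prob (G m) \<le> exp (- L)" for m L
  proof -
    obtain M where M: "M > m" "L \<le> (\<Sum>n\<in>{m..<M}. q n)"
      using partial_unbounded[of q m L] q01 div unfolding q_def by auto
    have F_sets: "F n \<in> sets ?P" for n unfolding F_eq using E_sets by auto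
    have "(\<Inter>n\<in>{m..<M}. F n) \<in> sets ?P"
      by (rule sets.finite_INT) (use M(1) F_sets in auto)
    then have "P.prob (G m) \<le> P.prob (\<Inter>n\<in>{m..<M}. F n)"
      using Gsub[OF M(1)] by (intro P.finite_measure_mono) auto
    also have "\<dots> = (\<Prod>n\<in>{m..<M}. 1 - q n)" using M(1) by (intro prodF) auto
    also have "\<dots> \<le> (\<Prod>n\<in>{m..<M}. exp (- q n))"
      by (intro prod_mono) (use q01 exp_ge_add_one_self[of "- q _"] in \<open>auto\<close>)
    also have "\<dots> = exp (- (\<Sum>n\<in>{m..<M}. q n))" by (simp add: exp_sum[symmetric] sum_negf)
    also have "\<dots> \<le> exp (- L)" using M(2) by simp
    finally show ?thesis .
  qed
  have G0: "P.prob (G m) = 0" for m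
  proof (rule ccontr)
    assume "P.prob (G m) \<noteq> 0"
    then have pos: "P.prob (G m) > 0" using measure_nonneg[of ?P "G m"] by linarith
    have "P.prob (G m) \<le> exp (- (- ln (P.prob (G m) / 2)))" by (rule Gbound)
    also have "\<dots> = P.prob (G m) / 2" using pos by simp
    finally show False using pos by simp
  qed
  have "AE \<omega> in ?P. \<exists>n\<ge>m. \<forall>i<\<kappa> n. \<omega> (n,i) \<in> B" for m
  proof (rule AE_I')
    show "G m \<in> null_sets ?P" using G_sets G0 by (simp add: P.emeasure_eq_measure null_sets_def)
    show "{\<omega> \<in> space ?P. \<not> (\<exists>n\<ge>m. \<forall>i<\<kappa> n. \<omega> (n,i) \<in> B)} \<subseteq> G m"
      unfolding G_def by auto
  qed
  then show ?thesis by (simp add: AE_all_countable)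
qed


lemma AE_fst_pair:
  assumes "AE x in M1. P x" and "sigma_finite_measure M2"
  shows "AE \<omega> in M1 \<Otimes>\<^sub>M M2. P (fst \<omega>)"
proof -
  interpret M2: sigma_finite_measure M2 by fact
  from assms(1) obtain N where N: "{x \<in> space M1. \<not> P x} \<subseteq> N" "emeasure M1 N = 0" "N \<in> sets M1"
    by (rule AE_E)
  show ?thesis
  proof (rule AE_I')
    show "N \<times> space M2 \<in> null_sets (M1 \<Otimes>\<^sub>M M2)"
      using N by (simp add: null_sets_def M2.emeasure_pair_measure_Times)
    show "{\<omega> \<in> space (M1 \<Otimes>\<^sub>M M2). \<not> P (fst \<omega>)} \<subseteq> N \<times> space M2"
      using N(1) by (auto simp: space_pair_measure)
  qed
qed

lemma label_AE:
  fixes \<mu> :: "'a measure"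
  assumes pm: "prob_space \<mu>" and sp: "space \<mu> = UNIV"
    and f_meas: "f \<in> measurable \<mu> (count_space UNIV)"
    and B: "B \<in> sets \<mu>" and z: "emeasure \<mu> (B - f -` {y}) = 0"
  shows "AE \<omega> in PiM (UNIV::(nat\<times>nat) set) (\<lambda>_. \<mu>). \<forall>n i. \<omega> (n,i) \<in> B \<longrightarrow> f (\<omega> (n,i)) = y"
proof -
  have fy: "f -` {y} \<in> sets \<mu>"
    using measurable_sets[OF f_meas, of "{y}"] sp by simp
  have "AE x in \<mu>. x \<in> B \<longrightarrow> f x = y"
  proof (rule AE_I')
    show "B - f -` {y} \<in> null_sets \<mu>" using z B fy by (auto simp: null_sets_def)
  qed auto
  then have "AE \<omega> in PiM (UNIV::(nat\<times>nat) set) (\<lambda>_. \<mu>). \<omega> j \<in> B \<longrightarrow> f (\<omega> j) = y" for j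
    using pm by (intro AE_PiM_component) auto
  then show ?thesis by (simp add: AE_all_countable)
qed


theorem mainTheorem10:
  fixes \<mu> :: "'a::metric_space measure"
    and f :: "'a \<Rightarrow> 'b::countable"
    and \<kappa> :: "nat \<Rightarrow> nat"
    and K :: nat
  assumes prob: "prob_space \<mu>"
    and sets_mu: "sets \<mu> = sets borel"
    and f_meas: "f \<in> measurable \<mu> (count_space UNIV)"
    and K2: "K \<ge> 2"
    and kappa_pos: "\<And>n. n \<ge> 1 \<Longrightarrow> \<kappa> n \<ge> 1"
    and kappa_div: "\<And>\<rho>::real. 0 < \<rho> \<Longrightarrow> \<rho> \<le> 1 \<Longrightarrow> \<not> summable (\<lambda>n. \<rho> ^ \<kappa> n)"
    and sep: "separable_space (euclidean :: 'a topology)"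
    and bdry_null: "\<exists>N\<in>null_sets \<mu>. {b. boundary_pt \<mu> f b} \<subseteq> N"
  shows "AE \<omega> in sample_space \<mu>.
           (let C = (\<lambda>n i. fst \<omega> (n, i)); T = snd \<omega>;
                Q = {x. \<exists>\<^sub>F n in sequentially. Phi K f x (Zproc K f \<kappa> C T n) > 0}
            in \<exists>N\<in>null_sets \<mu>. Q \<subseteq> N)"
proof -
  interpret mu: prob_space \<mu> by (rule prob)
  have sp: "space \<mu> = UNIV" using sets_eq_imp_space_eq[OF sets_mu] by simp
  have ball_sets: "ball c r \<in> sets \<mu>" for c r using sets_mu by simp
  have fy: "f -` {y} \<in> sets \<mu>" for y
    using measurable_sets[OF f_meas, of "{y}"] sp by simp
  obtain D :: "'a set" where D: "countable D" "closure D = UNIV"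
    using sep unfolding separable_space_def by auto
  have dense: "\<exists>d\<in>D. dist d x < e" if "e > 0" for x :: 'a and e :: real
    using D(2) closure_approachable[of x D] that by auto
  define Bs where "Bs = (\<lambda>(d,q). ball d (real_of_rat q)) ` (D \<times> (UNIV :: rat set))"
  have Bs_count: "countable Bs" unfolding Bs_def using D(1) by auto
  have Bs_sets: "B \<in> sets \<mu>" if "B \<in> Bs" for B using that ball_sets unfolding Bs_def by auto
  have approx: "\<exists>B\<in>Bs. ball x a \<subseteq> B \<and> B \<subseteq> ball x b" if ab: "0 < a" "a < b" for x :: 'a and a b :: real
  proof -
    define \<delta> where "\<delta> = (b - a) / 3"
    have \<delta>: "\<delta> > 0" using ab unfolding \<delta>_def by simp
    obtain d where d: "d \<in> D" "dist d x < \<delta>" using dense[OF \<delta>] by blast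
    have "a + \<delta> < b - \<delta>" using ab unfolding \<delta>_def by (simp add: field_simps)
    then obtain r where r: "r \<in> \<rat>" "a + \<delta> < r" "r < b - \<delta>" using Rats_dense_in_real by blast
    then obtain q where q: "r = real_of_rat q" by (auto elim: Rats_cases)
    have "ball d r \<in> Bs" unfolding Bs_def q using d(1) by auto
    moreover have "ball x a \<subseteq> ball d r"
    proof
      fix y assume "y \<in> ball x a"
      then have "dist x y < a" by simp
      moreover have "dist d y \<le> dist d x + dist x y" by (rule dist_triangle)
      ultimately show "y \<in> ball d r" using d(2) r(2) by simp
    qed
    moreover have "ball d r \<subseteq> ball x b"
    proof
      fix y assume "y \<in> ball d r"
      then have "dist d y < r" by simp
      moreover have "dist x y \<le> dist x d + dist d y" by (rule dist_triangle)
      ultimately show "y \<in> ball x b" using d(2) r(3) by (simp add: dist_commute)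
    qed
    ultimately show ?thesis by blast
  qed
  obtain Nb where Nb: "Nb \<in> null_sets \<mu>" "{b. boundary_pt \<mu> f b} \<subseteq> Nb" using bdry_null by blast
  define N0 where "N0 = Nb \<union> (\<Union>B\<in>{B\<in>Bs. emeasure \<mu> B = 0}. B)"
  have N0_null: "N0 \<in> null_sets \<mu>"
    unfolding N0_def
  proof (intro null_sets.Un Nb(1) null_sets_UN')
    show "countable {B \<in> Bs. emeasure \<mu> B = 0}" using Bs_count by auto
    fix B assume "B \<in> {B \<in> Bs. emeasure \<mu> B = 0}"
    then show "B \<in> null_sets \<mu>" using Bs_sets by (auto simp: null_sets_def)
  qed
  let ?P = "PiM (UNIV::(nat\<times>nat) set) (\<lambda>_. \<mu>)"
  define Good where "Good \<omega> \<longleftrightarrow>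
     (\<forall>B\<in>Bs. emeasure \<mu> B \<noteq> 0 \<longrightarrow> (\<forall>m. \<exists>n\<ge>m. \<forall>i<\<kappa> n. \<omega> (n,i) \<in> B)) \<and>
     (\<forall>B\<in>Bs. \<forall>y. emeasure \<mu> (B - f -` {y}) = 0 \<longrightarrow> (\<forall>n i. \<omega> (n,i) \<in> B \<longrightarrow> f (\<omega> (n,i)) = y))"
    for \<omega> :: "nat \<times> nat \<Rightarrow> 'a"
  have AE1: "AE \<omega> in ?P. \<forall>B\<in>Bs. emeasure \<mu> B \<noteq> 0 \<longrightarrow> (\<forall>m. \<exists>n\<ge>m. \<forall>i<\<kappa> n. \<omega> (n,i) \<in> B)"
  proof (subst AE_ball_countable[OF Bs_count], intro ballI)
    fix B assume B: "B \<in> Bs"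
    show "AE \<omega> in ?P. emeasure \<mu> B \<noteq> 0 \<longrightarrow> (\<forall>m. \<exists>n\<ge>m. \<forall>i<\<kappa> n. \<omega> (n,i) \<in> B)"
    proof (cases "emeasure \<mu> B = 0")
      case True then show ?thesis by simp
    next
      case False
      then have "measure \<mu> B > 0" using mu.emeasure_eq_measure[of B] by (simp add: zero_less_measure_iff)
      moreover have "measure \<mu> B \<le> 1" by (rule mu.prob_le_1)
      ultimately have "\<not> summable (\<lambda>n. measure \<mu> B ^ \<kappa> n)" by (rule kappa_div)
      then have "AE \<omega> in ?P. \<forall>m. \<exists>n\<ge>m. \<forall>i<\<kappa> n. \<omega> (n,i) \<in> B"
        by (intro hit_AE prob Bs_sets B)
      then show ?thesis by (rule eventually_mono) simp
    qed
  qed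
  have AE2: "AE \<omega> in ?P. \<forall>B\<in>Bs. \<forall>y. emeasure \<mu> (B - f -` {y}) = 0 \<longrightarrow> (\<forall>n i. \<omega> (n,i) \<in> B \<longrightarrow> f (\<omega> (n,i)) = y)"
  proof (subst AE_ball_countable[OF Bs_count], intro ballI, subst AE_all_countable, intro allI)
    fix B y assume B: "B \<in> Bs"
    show "AE \<omega> in ?P. emeasure \<mu> (B - f -` {y}) = 0 \<longrightarrow> (\<forall>n i. \<omega> (n,i) \<in> B \<longrightarrow> f (\<omega> (n,i)) = y)"
    proof (cases "emeasure \<mu> (B - f -` {y}) = 0")
      case False then show ?thesis by simp
    next
      case True
      have "AE \<omega> in ?P. \<forall>n i. \<omega> (n,i) \<in> B \<longrightarrow> f (\<omega> (n,i)) = y"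
        by (rule label_AE[OF prob sp f_meas Bs_sets[OF B] True])
      then show ?thesis by (rule eventually_mono) simp
    qed
  qed
  have AEG: "AE \<omega> in ?P. Good \<omega>" unfolding Good_def using AE1 AE2 by simp
  define U where "U = PiM (UNIV::nat set) (\<lambda>_. uniform_measure lborel {0..1::real})"
  have "prob_space U" unfolding U_def
    by (intro prob_space_PiM prob_space_uniform_measure) auto
  then have sfU: "sigma_finite_measure U" by (rule prob_space_imp_sigma_finite)
  have AEG': "AE \<omega> in sample_space \<mu>. Good (fst \<omega>)"
    unfolding sample_space_def U_def[symmetric] by (rule AE_fst_pair[OF AEG sfU])
  show ?thesis
  proof (rule eventually_mono[OF AEG'])
    fix \<omega> :: "(nat \<times> nat \<Rightarrow> 'a) \<times> (nat \<Rightarrow> real)" assume G: "Good (fst \<omega>)"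
    define C where "C = (\<lambda>n i. fst \<omega> (n, i))"
    have G1: "\<And>B m. B \<in> Bs \<Longrightarrow> emeasure \<mu> B \<noteq> 0 \<Longrightarrow> \<exists>n\<ge>m. \<forall>i<\<kappa> n. C n i \<in> B"
      using G unfolding Good_def C_def by blast
    have G2: "\<And>B y n i. B \<in> Bs \<Longrightarrow> emeasure \<mu> (B - f -` {y}) = 0 \<Longrightarrow> C n i \<in> B \<Longrightarrow> f (C n i) = y"
      using G unfolding Good_def C_def by blast
    have "{x. \<exists>\<^sub>F n in sequentially. Phi K f x (Zproc K f \<kappa> C (snd \<omega>) n) > 0} \<subseteq> N0"
    proof
      fix x assume xQ: "x \<in> {x. \<exists>\<^sub>F n in sequentially. Phi K f x (Zproc K f \<kappa> C (snd \<omega>) n) > 0}"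
      show "x \<in> N0"
      proof (rule ccontr)
        assume xN: "x \<notin> N0"
        then have "\<not> boundary_pt \<mu> f x" using Nb(2) unfolding N0_def by auto
        then obtain \<epsilon> where \<epsilon>: "\<epsilon> > 0" "\<not> emeasure \<mu> (ball x \<epsilon> - f -` {f x}) > 0"
          unfolding boundary_pt_def by auto
        then have z\<epsilon>: "emeasure \<mu> (ball x \<epsilon> - f -` {f x}) = 0" by (simp add: not_gr_zero)
        obtain Bo where Bo: "Bo \<in> Bs" "ball x (\<epsilon>/2) \<subseteq> Bo" "Bo \<subseteq> ball x \<epsilon>"
          using approx[of "\<epsilon>/2" "\<epsilon>" x] \<epsilon>(1) by auto
        have "emeasure \<mu> (Bo - f -` {f x}) \<le> emeasure \<mu> (ball x \<epsilon> - f -` {f x})"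
          using Bo(3) ball_sets fy by (intro emeasure_mono) auto
        then have zBo: "emeasure \<mu> (Bo - f -` {f x}) = 0" using z\<epsilon> by simp
        have lab: "\<And>n i. C n i \<in> ball x (\<epsilon>/2) \<Longrightarrow> f (C n i) = f x"
          using G2[OF Bo(1) zBo] Bo(2) by blast
        have hit: "\<exists>n\<ge>m. \<forall>i<\<kappa> n. C n i \<in> ball x \<delta>" if \<delta>pos: "\<delta> > 0" for \<delta> m
        proof -
          obtain B where B: "B \<in> Bs" "ball x (\<delta>/2) \<subseteq> B" "B \<subseteq> ball x \<delta>"
            using approx[of "\<delta>/2" "\<delta>" x] \<delta>pos by auto
          have "x \<in> B" using B(2) \<delta>pos by auto
          then have "emeasure \<mu> B \<noteq> 0" using xN B(1) unfolding N0_def by auto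
          then obtain n where "n \<ge> m" "\<forall>i<\<kappa> n. C n i \<in> B" using G1[OF B(1)] by blast
          then show ?thesis using B(3) by blast
        qed
        have "\<forall>\<^sub>F n in sequentially. Phi K f x (Zproc K f \<kappa> C (snd \<omega>) n) = 0"
          using det[where r="\<epsilon>/2" and x=x and C=C and K=K and \<kappa>=\<kappa> and f=f and T="snd \<omega>", OF kappa_pos _ _ lab hit] K2 \<epsilon>(1)
          by simp
        then have "\<forall>\<^sub>F n in sequentially. \<not> Phi K f x (Zproc K f \<kappa> C (snd \<omega>) n) > 0"
          by (rule eventually_mono) simp
        then show False using xQ by (simp add: frequently_def)
      qed
    qed
    then show "let C = (\<lambda>n i. fst \<omega> (n, i)); T = snd \<omega>;
                Q = {x. \<exists>\<^sub>F n in sequentially. Phi K f x (Zproc K f \<kappa> C T n) > 0}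
            in \<exists>N\<in>null_sets \<mu>. Q \<subseteq> N"
      unfolding Let_def C_def using N0_null by blast
  qed
qed

end
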